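(* A commutative semigroup $S$ has a non-universal monoid congruence if and only if $S$ has a subset $A$ with $\emptyset\neq A\neq S$ such that $\mathrm{Sep}\,A\neq\emptyset$.
   Context: For a semigroup $S$ and $A\subseteq S$, $\mathrm{Sep}\,A$ (the separator of $A$) is the set of all $x\in S$ with $xA\subseteq A$, $Ax\subseteq A$, $x(S\setminus A)\subseteq S\setminus A$ and $(S\setminus A)x\subseteq S\setminus A$. A congruence $p$ on $S$ is a monoid congruence if the factor semigroup $S/p$ has an identity element; it is universal if $p=S\times S$. *)

theory Defs
  imports Main
begin

text \<open>The semigroup S is the universe of a type of class semigroup_mult
  (commutative: ab_semigroup_mult). Subsets of S are sets of that type.\<close>

definition Sep :: "'a::semigroup_mult set \<Rightarrow> 'a set" where
  "Sep A = {x. (\<forall>a\<in>A. x * a \<in> A) \<and> (\<forall>a\<in>A. a * x \<in> A)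
             \<and> (\<forall>b\<in>-A. x * b \<in> -A) \<and> (\<forall>b\<in>-A. b * x \<in> -A)}"

definition semigroup_congruence :: "('a::semigroup_mult \<times> 'a) set \<Rightarrow> bool" where
  "semigroup_congruence p \<longleftrightarrow> equiv UNIV p \<and>
     (\<forall>a b c. (a, b) \<in> p \<longrightarrow> (c * a, c * b) \<in> p \<and> (a * c, b * c) \<in> p)"

definition monoid_congruence :: "('a::semigroup_mult \<times> 'a) set \<Rightarrow> bool" where
  "monoid_congruence p \<longleftrightarrow> semigroup_congruence p \<and>
     (\<exists>e. \<forall>x. (e * x, x) \<in> p \<and> (x * e, x) \<in> p)"

end

theory Submission
  imports Defs
begin

lemma dir1:
  fixes p :: "('a::ab_semigroup_mult \<times> 'a) set"
  assumes m: "monoid_congruence p" and nu: "p \<noteq> UNIV"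
  shows "\<exists>A :: 'a set. A \<noteq> {} \<and> A \<noteq> UNIV \<and> Sep A \<noteq> {}"
proof -
  from m obtain e where e: "\<And>x. (e * x, x) \<in> p" "\<And>x. (x * e, x) \<in> p"
    and eq: "equiv UNIV p" unfolding monoid_congruence_def semigroup_congruence_def by blast
  have sym: "(a,b) \<in> p \<Longrightarrow> (b,a) \<in> p" for a b using eq by (meson equivE symE)
  have tr: "(a,b) \<in> p \<Longrightarrow> (b,c) \<in> p \<Longrightarrow> (a,c) \<in> p" for a b c using eq by (meson equivE transE)
  have rf: "(a,a) \<in> p" for a using eq unfolding equiv_def refl_on_def by blast
  define A where "A = {y. (y, e) \<in> p}"
  have "A \<noteq> {}" using rf A_def by auto
  moreover have "A \<noteq> UNIV"
  proof
    assume "A = UNIV"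
    hence "(y, e) \<in> p" for y unfolding A_def by auto
    hence "(a,b) \<in> p" for a b using sym tr by blast
    thus False using nu by auto
  qed
  moreover have "e \<in> Sep A"
  proof -
    have "(e*y, e) \<in> p \<longleftrightarrow> (y, e) \<in> p" for y
      using e(1)[of y] sym tr by blast
    moreover have "(y*e, e) \<in> p \<longleftrightarrow> (y, e) \<in> p" for y
      using e(2)[of y] sym tr by blast
    ultimately show ?thesis unfolding Sep_def A_def by auto
  qed
  ultimately show ?thesis by blast
qed

lemma dir2:
  fixes A :: "'a::ab_semigroup_mult set"
  assumes "A \<noteq> {}" "A \<noteq> UNIV" "Sep A \<noteq> {}"
  shows "\<exists>p :: ('a \<times> 'a) set. monoid_congruence p \<and> p \<noteq> UNIV"
proof -
  from assms obtain e where eS: "e \<in> Sep A" by auto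
  hence e1: "\<And>y. e * y \<in> A \<longleftrightarrow> y \<in> A" unfolding Sep_def by auto
  define p where "p = {(a::'a,b). (a\<in>A \<longleftrightarrow> b\<in>A) \<and> (\<forall>s. s*a\<in>A \<longleftrightarrow> s*b\<in>A)}"
  have "equiv UNIV p" unfolding p_def equiv_def refl_on_def sym_def trans_def by auto
  moreover have "(c * a, c * b) \<in> p \<and> (a * c, b * c) \<in> p" if "(a,b) \<in> p" for a b c
  proof -
    have "c * a \<in> A \<longleftrightarrow> c * b \<in> A" "\<forall>s. s*(c*a)\<in>A \<longleftrightarrow> s*(c*b)\<in>A"
      using that unfolding p_def by (auto simp: mult.assoc[symmetric])
    thus ?thesis unfolding p_def by (simp add: mult.commute)
  qed
  moreover have "(e * x, x) \<in> p \<and> (x * e, x) \<in> p" for x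
  proof -
    have "s * (e * x) \<in> A \<longleftrightarrow> s * x \<in> A" for s
      using e1[of "s*x"] by (simp add: mult.left_commute)
    thus ?thesis unfolding p_def using e1[of x] by (simp add: mult.commute)
  qed
  moreover have "p \<noteq> UNIV"
  proof -
    obtain a b where "a \<in> A" "b \<notin> A" using assms(1,2) by auto
    thus ?thesis unfolding p_def by auto
  qed
  ultimately show ?thesis unfolding monoid_congruence_def semigroup_congruence_def by blast
qed

theorem corollary5:
  shows "(\<exists>p :: ('a::ab_semigroup_mult \<times> 'a) set. monoid_congruence p \<and> p \<noteq> UNIV)
     \<longleftrightarrow> (\<exists>A :: 'a set. A \<noteq> {} \<and> A \<noteq> UNIV \<and> Sep A \<noteq> {})"
  using dir1 dir2 by metis

end
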